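(* Let $a,b,c\ge 2$ be integers. Then the ring $A=\mathbb{C}[X,Y,Z]/(X^aY^b-Z^c)$ is rigid (this includes the cases where $\gcd(a,b,c)>1$, in which $A$ is not a domain).
   Context: A locally nilpotent derivation (LND) of a $\mathbb{C}$-algebra $A$ is a $\mathbb{C}$-linear derivation $D$ such that every $a\in A$ satisfies $D^n(a)=0$ for some $n$. A ring is rigid if its only LND is the zero derivation. *)

theory Defs
  imports "HOL-Computational_Algebra.Polynomial"
begin

text \<open>The polynomial ring C[X,Y,Z], realised as iterated univariate polynomials:
  X is the innermost variable, Y the middle one, Z the outermost.\<close>
type_synonym cpoly3 = "complex poly poly poly"

definition varX :: cpoly3 where "varX = [:[:[:0, 1:]:]:]"
definition varY :: cpoly3 where "varY = [:[:0, 1:]:]"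
definition varZ :: cpoly3 where "varZ = [:0, 1:]"
definition const3 :: "complex \<Rightarrow> cpoly3" where "const3 c = [:[:[:c:]:]:]"

text \<open>Maps of the quotient A = C[X,Y,Z]/(f) are represented by maps D on C[X,Y,Z]
  that respect congruence modulo the principal ideal (f); all identities are
  required modulo (f), i.e. in A.\<close>
definition quot_derivation :: "cpoly3 \<Rightarrow> (cpoly3 \<Rightarrow> cpoly3) \<Rightarrow> bool" where
  "quot_derivation f D \<longleftrightarrow>
     (\<forall>g h. f dvd (g - h) \<longrightarrow> f dvd (D g - D h)) \<and>
     (\<forall>g h. f dvd (D (g + h) - (D g + D h))) \<and>
     (\<forall>c g. f dvd (D (const3 c * g) - const3 c * D g)) \<and>
     (\<forall>g h. f dvd (D (g * h) - (g * D h + h * D g)))"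

definition quot_LND :: "cpoly3 \<Rightarrow> (cpoly3 \<Rightarrow> cpoly3) \<Rightarrow> bool" where
  "quot_LND f D \<longleftrightarrow> quot_derivation f D \<and> (\<forall>g. \<exists>n. f dvd (D ^^ n) g)"

definition quot_rigid :: "cpoly3 \<Rightarrow> bool" where
  "quot_rigid f \<longleftrightarrow> (\<forall>D. quot_LND f D \<longrightarrow> (\<forall>g. f dvd D g))"

end

theory Submission
  imports Defs "HOL-Library.Poly_Mapping" "HOL-Library.Product_Lexorder" "HOL-Library.Product_Plus"
begin

type_synonym lp = "(int \<times> int) \<Rightarrow>\<^sub>0 complex"

definition ishom :: "('a::comm_ring_1 \<Rightarrow> 'b::comm_ring_1) \<Rightarrow> bool" where
  "ishom \<phi> \<longleftrightarrow> (\<forall>x y. \<phi> (x + y) = \<phi> x + \<phi> y) \<and> (\<forall>x y. \<phi> (x * y) = \<phi> x * \<phi> y) \<and> \<phi> 1 = 1"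

lemma ishom_add: "ishom \<phi> \<Longrightarrow> \<phi> (x + y) = \<phi> x + \<phi> y" by (simp add: ishom_def)
lemma ishom_mult: "ishom \<phi> \<Longrightarrow> \<phi> (x * y) = \<phi> x * \<phi> y" by (simp add: ishom_def)
lemma ishom_1: "ishom \<phi> \<Longrightarrow> \<phi> 1 = 1" by (simp add: ishom_def)
lemma ishom_0: "ishom \<phi> \<Longrightarrow> \<phi> 0 = 0"
proof -
  assume h: "ishom \<phi>"
  have "\<phi> (0 + 0) = \<phi> 0 + \<phi> 0" using ishom_add[OF h] .
  then show ?thesis by simp
qed
lemma ishom_uminus: "ishom \<phi> \<Longrightarrow> \<phi> (- x) = - \<phi> x"
proof -
  assume h: "ishom \<phi>"
  have "\<phi> (x + - x) = \<phi> x + \<phi> (- x)" using ishom_add[OF h] .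
  then show ?thesis using ishom_0[OF h] by (simp add: add_eq_0_iff)
qed
lemma ishom_diff: "ishom \<phi> \<Longrightarrow> \<phi> (x - y) = \<phi> x - \<phi> y"
  using ishom_add[of \<phi> x "-y"] ishom_uminus[of \<phi> y] by simp
lemma ishom_power: "ishom \<phi> \<Longrightarrow> \<phi> (x ^ n) = \<phi> x ^ n"
  by (induction n) (simp_all add: ishom_1 ishom_mult)
lemma ishom_sum: "ishom \<phi> \<Longrightarrow> \<phi> (sum g A) = (\<Sum>x\<in>A. \<phi> (g x))"
  by (induction A rule: infinite_finite_induct) (simp_all add: ishom_0 ishom_add)

lemma map_poly_add_hom: "ishom \<phi> \<Longrightarrow> map_poly \<phi> (p + q) = map_poly \<phi> p + map_poly \<phi> q"
  by (rule poly_eqI) (simp add: coeff_map_poly ishom_0 ishom_add)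

lemma map_poly_mult_hom: "ishom \<phi> \<Longrightarrow> map_poly \<phi> (p * q) = map_poly \<phi> p * map_poly \<phi> q"
  by (rule poly_eqI) (simp add: coeff_map_poly ishom_0 coeff_mult ishom_sum ishom_mult)

lemma ishom_poly: "ishom \<phi> \<Longrightarrow> ishom (\<lambda>p. poly (map_poly \<phi> p) x)"
  unfolding ishom_def[of "\<lambda>p. poly (map_poly \<phi> p) x"]
  by (simp add: map_poly_add_hom map_poly_mult_hom ishom_1)

lemma ishom_single: "ishom (\<lambda>\<alpha>::complex. Poly_Mapping.single (0::int\<times>int) \<alpha>)"
  unfolding ishom_def by (simp add: Poly_Mapping.single_add Poly_Mapping.mult_single)

lemma lex_le_iff: "(x::int\<times>int) \<le> y \<longleftrightarrow> fst x < fst y \<or> (fst x = fst y \<and> snd x \<le> snd y)"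
  by (cases x; cases y) auto

lemma lex_add_mono: "(x::int\<times>int) \<le> y \<Longrightarrow> z \<le> w \<Longrightarrow> x + z \<le> y + w"
  unfolding lex_le_iff by auto

lemma lex_add_eq: "(x::int\<times>int) \<le> y \<Longrightarrow> z \<le> w \<Longrightarrow> x + z = y + w \<Longrightarrow> x = y \<and> z = w"
  unfolding lex_le_iff by (cases x; cases y; cases z; cases w) auto

lemma Sum_any_shift: "(\<Sum>q. (Poly_Mapping.lookup (F::lp) q when m = l + q)) = Poly_Mapping.lookup F (m - l)"
proof -
  have "\<And>q. (m = l + q) = (q = m - l)" by (auto simp: algebra_simps)
  then show ?thesis by simp
qed

lemma lookup_single_mult: "Poly_Mapping.lookup (Poly_Mapping.single k \<alpha> * (F::lp)) m = \<alpha> * Poly_Mapping.lookup F (m - k)"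
  unfolding Poly_Mapping.lookup_mult Poly_Mapping.lookup_single Sum_any_shift
  by (simp add: when_mult)

lemma lookup_mult_top:
  assumes "\<forall>k\<in>Poly_Mapping.keys (F::lp). k \<le> p" "\<forall>k\<in>Poly_Mapping.keys (G::lp). k \<le> q"
  shows "Poly_Mapping.lookup (F * G) (p + q) = Poly_Mapping.lookup F p * Poly_Mapping.lookup G q"
proof -
  have "Poly_Mapping.lookup (F * G) (p + q) = (\<Sum>l. Poly_Mapping.lookup F l * Poly_Mapping.lookup G (p + q - l))"
    unfolding Poly_Mapping.lookup_mult Sum_any_shift ..
  also have "\<dots> = (\<Sum>l. (Poly_Mapping.lookup F p * Poly_Mapping.lookup G q when l = p))"
  proof (rule Sum_any.cong)
    fix l
    show "Poly_Mapping.lookup F l * Poly_Mapping.lookup G (p + q - l) = (Poly_Mapping.lookup F p * Poly_Mapping.lookup G q when l = p)"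
    proof (cases "l = p")
      case True then show ?thesis by simp
    next
      case False
      have "Poly_Mapping.lookup F l = 0 \<or> Poly_Mapping.lookup G (p + q - l) = 0"
      proof (rule ccontr)
        assume "\<not> ?thesis"
        then have "l \<le> p" "p + q - l \<le> q" using assms by (auto simp: Poly_Mapping.in_keys_iff)
        moreover have "l + (p + q - l) = p + q" by simp
        ultimately show False using lex_add_eq False by blast
      qed
      then show ?thesis using False by auto
    qed
  qed
  also have "\<dots> = Poly_Mapping.lookup F p * Poly_Mapping.lookup G q" by simp
  finally show ?thesis .
qed

lemma keys_mult_le:
  assumes "\<forall>k\<in>Poly_Mapping.keys (F::lp). k \<le> p" "\<forall>k\<in>Poly_Mapping.keys (G::lp). k \<le> q"
  shows "\<forall>k\<in>Poly_Mapping.keys (F * G). k \<le> p + q"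
  using Poly_Mapping.keys_mult[of F G] assms lex_add_mono by blast

lemma pm_induct:
  assumes "P 0" "\<And>f a b. P f \<Longrightarrow> P (f + Poly_Mapping.single a b)"
  shows "P f"
proof (induction f rule: Poly_Mapping.update_induct)
  case const then show ?case using assms by simp
next
  case (update f a b)
  have "Poly_Mapping.update a b f = f + Poly_Mapping.single a b"
    using update(1) by (intro Poly_Mapping.poly_mapping_eqI)
       (auto simp: Poly_Mapping.lookup_update Poly_Mapping.lookup_add Poly_Mapping.lookup_single Poly_Mapping.in_keys_iff when_def)
  then show ?case using assms(2) update(3) by simp
qed

definition Ew :: "(int \<times> int \<Rightarrow> complex) \<Rightarrow> lp \<Rightarrow> lp" where
  "Ew w F = Poly_Mapping.mapp (\<lambda>k v. w k * v) F"

lemma lookup_Ew: "Poly_Mapping.lookup (Ew w F) k = w k * Poly_Mapping.lookup F k"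
  by (simp add: Ew_def Poly_Mapping.lookup_mapp when_def Poly_Mapping.in_keys_iff)

lemma Ew_add: "Ew w (F + G) = Ew w F + Ew w G"
  by (intro Poly_Mapping.poly_mapping_eqI) (simp add: lookup_Ew Poly_Mapping.lookup_add algebra_simps)

lemma Ew_0 [simp]: "Ew w 0 = 0"
  by (intro Poly_Mapping.poly_mapping_eqI) (simp add: lookup_Ew)

lemma Ew_single: "Ew w (Poly_Mapping.single k \<alpha>) = Poly_Mapping.single k (w k * \<alpha>)"
  by (intro Poly_Mapping.poly_mapping_eqI) (simp add: lookup_Ew Poly_Mapping.lookup_single when_def)

lemma keys_Ew: "Poly_Mapping.keys (Ew w F) \<subseteq> Poly_Mapping.keys F"
  by (simp add: Ew_def Poly_Mapping.keys_mapp_subset)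

lemma Ew_mult:
  assumes w: "\<And>k l. w (k + l) = w k + w l"
  shows "Ew w (F * G) = Ew w F * G + F * Ew w G"
proof (induction F rule: pm_induct)
  case 1 then show ?case by simp
next
  case (2 F a \<alpha>)
  have "Ew w (Poly_Mapping.single a \<alpha> * G) = Ew w (Poly_Mapping.single a \<alpha>) * G + Poly_Mapping.single a \<alpha> * Ew w G"
  proof (induction G rule: pm_induct)
    case 1 then show ?case by simp
  next
    case (2 G b \<beta>)
    have "Ew w (Poly_Mapping.single a \<alpha> * Poly_Mapping.single b \<beta>) =
       Ew w (Poly_Mapping.single a \<alpha>) * Poly_Mapping.single b \<beta> + Poly_Mapping.single a \<alpha> * Ew w (Poly_Mapping.single b \<beta>)"
      by (simp add: Ew_single Poly_Mapping.mult_single w algebra_simps Poly_Mapping.single_add[symmetric])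
    then show ?case using 2 by (simp add: distrib_left Ew_add algebra_simps)
  qed
  then show ?case using 2 by (simp add: distrib_right Ew_add algebra_simps)
qed


lemma single_pow: "(Poly_Mapping.single (x::int, y::int) (\<alpha>::complex)) ^ n = Poly_Mapping.single (int n * x, int n * y) (\<alpha> ^ n)"
  by (induction n) (simp_all add: Poly_Mapping.mult_single algebra_simps zero_prod_def[symmetric])

locale abc =
  fixes a b c :: nat
  assumes a2: "a \<ge> 2" and b2: "b \<ge> 2" and c2: "c \<ge> 2"
begin

definition fp :: cpoly3 where "fp = varX ^ a * varY ^ b - varZ ^ c"

definition phi1 :: "complex poly \<Rightarrow> lp" where
  "phi1 r = poly (map_poly (\<lambda>\<alpha>. Poly_Mapping.single 0 \<alpha>) r) (Poly_Mapping.single (int c, 0) 1)"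
definition phi2 :: "complex poly poly \<Rightarrow> lp" where
  "phi2 q = poly (map_poly phi1 q) (Poly_Mapping.single (0, int c) 1)"
definition psi :: "complex \<Rightarrow> cpoly3 \<Rightarrow> lp" where
  "psi z h = poly (map_poly phi2 h) (Poly_Mapping.single (int a, int b) z)"

lemma hom_phi1: "ishom phi1"
  unfolding phi1_def[abs_def] using ishom_poly[OF ishom_single] by simp
lemma hom_phi2: "ishom phi2"
  unfolding phi2_def[abs_def] using ishom_poly[OF hom_phi1] by simp
lemma hom_psi: "ishom (psi z)"
  unfolding psi_def[abs_def] using ishom_poly[OF hom_phi2] by simp

lemma phi1_pCons: "phi1 (pCons \<alpha> r) = Poly_Mapping.single 0 \<alpha> + Poly_Mapping.single (int c, 0) 1 * phi1 r"
  unfolding phi1_def by (simp add: map_poly_pCons)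
lemma phi2_pCons: "phi2 (pCons r q) = phi1 r + Poly_Mapping.single (0, int c) 1 * phi2 q"
  unfolding phi2_def by (simp add: map_poly_pCons ishom_0[OF hom_phi1])

lemma lookup_phi1_zero: "(\<forall>i. k \<noteq> (int (c*i), 0)) \<Longrightarrow> Poly_Mapping.lookup (phi1 r) k = 0"
proof (induction r arbitrary: k)
  case 0 then show ?case by (simp add: ishom_0[OF hom_phi1])
next
  case (pCons \<alpha> r)
  have "k \<noteq> 0" using pCons(3)[rule_format, of 0] by (simp add: zero_prod_def)
  moreover have "\<forall>i. k - (int c, 0) \<noteq> (int (c*i), 0)"
  proof
    fix i show "k - (int c, 0) \<noteq> (int (c*i), 0)" using pCons(3)[rule_format, of "Suc i"] by (cases k) (auto simp: algebra_simps)
  qed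
  ultimately show ?case using pCons(2)
    by (simp add: phi1_pCons Poly_Mapping.lookup_add lookup_single_mult Poly_Mapping.lookup_single when_def)
qed

lemma lookup_phi1: "Poly_Mapping.lookup (phi1 r) (int c * int i, 0) = coeff r i"
proof (induction r arbitrary: i)
  case 0 then show ?case by (simp add: ishom_0[OF hom_phi1])
next
  case (pCons \<alpha> r)
  show ?case
  proof (cases i)
    case 0
    have "Poly_Mapping.lookup (phi1 r) (- int c, 0) = 0"
    proof (intro lookup_phi1_zero allI)
      fix i have "int c * int i \<ge> 0" by simp
      then show "(- int c, 0) \<noteq> (int (c * i), 0)" using c2 by (clarsimp; linarith)
    qed
    then show ?thesis using 0 by (simp add: phi1_pCons Poly_Mapping.lookup_add lookup_single_mult zero_prod_def[symmetric])
  next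
    case (Suc j)
    have e: "int c * (1 + int j) - int c = int c * int j" by (simp add: algebra_simps)
    have "(int c * int i, 0::int) \<noteq> 0" using Suc c2 by (simp add: zero_prod_def)
    then show ?thesis using Suc pCons(2)
      by (simp add: phi1_pCons Poly_Mapping.lookup_add lookup_single_mult e Poly_Mapping.lookup_single when_def)
  qed
qed

lemma lookup_phi2_zero: "(\<forall>i j. k \<noteq> (int (c*i), int (c*j))) \<Longrightarrow> Poly_Mapping.lookup (phi2 q) k = 0"
proof (induction q arbitrary: k)
  case 0 then show ?case by (simp add: ishom_0[OF hom_phi2])
next
  case (pCons r q)
  have "Poly_Mapping.lookup (phi1 r) k = 0"
    using pCons(3) by (intro lookup_phi1_zero) (metis mult_0_right of_nat_0)
  moreover have "\<forall>i j. k - (0, int c) \<noteq> (int (c*i), int (c*j))"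
  proof (intro allI)
    fix i j show "k - (0, int c) \<noteq> (int (c*i), int (c*j))" using pCons(3)[rule_format, of i "Suc j"] by (cases k) (auto simp: algebra_simps)
  qed
  ultimately show ?case using pCons(2)
    by (simp add: phi2_pCons Poly_Mapping.lookup_add lookup_single_mult)
qed

lemma lookup_phi2: "Poly_Mapping.lookup (phi2 q) (int c * int i, int c * int j) = coeff (coeff q j) i"
proof (induction q arbitrary: j)
  case 0 then show ?case by (simp add: ishom_0[OF hom_phi2])
next
  case (pCons r q)
  show ?case
  proof (cases j)
    case 0
    have "Poly_Mapping.lookup (phi2 q) (int (c*i), - int c) = 0"
    proof (intro lookup_phi2_zero allI)
      fix i' j' have "int c * int j' \<ge> 0" by simp
      then show "(int (c*i), - int c) \<noteq> (int (c * i'), int (c*j'))" using c2 by (clarsimp; linarith)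
    qed
    then show ?thesis using 0 by (simp add: phi2_pCons Poly_Mapping.lookup_add lookup_single_mult lookup_phi1)
  next
    case (Suc j')
    have e: "int c * (1 + int j') - int c = int c * int j'" by (simp add: algebra_simps)
    have "Poly_Mapping.lookup (phi1 r) (int c * int i, int c * int j) = 0"
    proof (intro lookup_phi1_zero allI)
      fix i' have "int c * int j > 0" using Suc c2 by simp
      then show "(int c * int i, int c * int j) \<noteq> (int (c * i'), 0)" by auto
    qed
    then show ?thesis using Suc pCons(2)
      by (simp add: phi2_pCons Poly_Mapping.lookup_add lookup_single_mult e)
  qed
qed

lemma phi2_inj: "phi2 q = 0 \<Longrightarrow> q = 0"
proof -
  assume "phi2 q = 0"
  then have "coeff (coeff q j) i = 0" for i j using lookup_phi2[of q i j] by simp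
  then show "q = 0" by (intro poly_eqI) (simp add: poly_eq_iff)
qed

lemma psi_sum: "psi z h = (\<Sum>k\<le>degree h. phi2 (coeff h k) * Poly_Mapping.single (int (k*a), int (k*b)) (z ^ k))"
proof -
  have "psi z h = (\<Sum>k\<le>degree (map_poly phi2 h). coeff (map_poly phi2 h) k * Poly_Mapping.single (int a, int b) z ^ k)"
    unfolding psi_def poly_altdef ..
  also have "\<dots> = (\<Sum>k\<le>degree h. coeff (map_poly phi2 h) k * Poly_Mapping.single (int a, int b) z ^ k)"
    by (rule sum.mono_neutral_left) (auto simp: map_poly_degree_leq coeff_eq_0)
  also have "\<dots> = (\<Sum>k\<le>degree h. phi2 (coeff h k) * Poly_Mapping.single (int (k*a), int (k*b)) (z ^ k))"
    by (simp add: coeff_map_poly ishom_0[OF hom_phi2] single_pow)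
  finally show ?thesis .
qed

lemma lookup_psi: "Poly_Mapping.lookup (psi z h) m =
   (\<Sum>k\<le>degree h. z ^ k * Poly_Mapping.lookup (phi2 (coeff h k)) (m - (int (k*a), int (k*b))))"
  unfolding psi_sum Poly_Mapping.lookup_sum
  by (simp add: mult.commute[of "phi2 _"] lookup_single_mult)

end


lemma cpoly3_induct:
  assumes C: "\<And>\<alpha>. P (const3 \<alpha>)" and A: "\<And>g h. P g \<Longrightarrow> P h \<Longrightarrow> P (g + h)"
    and X: "\<And>g. P g \<Longrightarrow> P (varX * g)" and Y: "\<And>g. P g \<Longrightarrow> P (varY * g)"
    and Z: "\<And>g. P g \<Longrightarrow> P (varZ * g)"
  shows "P h"
proof -
  have P0: "P 0" using C[of 0] by (simp add: const3_def)
  have 1: "P [:[:r:]:]" for r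
  proof (induction r)
    case 0 then show ?case using P0 by simp
  next
    case (pCons \<alpha> r)
    have "[:[:pCons \<alpha> r:]:] = const3 \<alpha> + varX * [:[:r:]:]" by (simp add: const3_def varX_def)
    then show ?case using A C X pCons(2) by metis
  qed
  have 2: "P [:q:]" for q
  proof (induction q)
    case 0 then show ?case using P0 by simp
  next
    case (pCons r q)
    have "[:pCons r q:] = [:[:r:]:] + varY * [:q:]" by (simp add: varY_def)
    then show ?case using A 1 Y pCons(2) by metis
  qed
  show "P h"
  proof (induction h)
    case 0 then show ?case using P0 by simp
  next
    case (pCons q h)
    have "pCons q h = [:q:] + varZ * h" by (simp add: varZ_def)
    then show ?case using A 2 Z pCons(2) by metis
  qed
qed

context abc begin

abbreviation "sX \<equiv> Poly_Mapping.single (int c, 0) (1::complex)"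
abbreviation "sY \<equiv> Poly_Mapping.single (0, int c) (1::complex)"
abbreviation "sZ z \<equiv> Poly_Mapping.single (int a, int b) (z::complex)"

lemma psi_const: "psi z (const3 \<alpha>) = Poly_Mapping.single 0 \<alpha>"
  by (simp add: psi_def const3_def map_poly_pCons ishom_0[OF hom_phi2] phi2_pCons phi1_pCons ishom_0[OF hom_phi1] ishom_1[OF hom_phi1] ishom_1[OF hom_phi2])
lemma psi_X: "psi z varX = sX"
  by (simp add: psi_def varX_def map_poly_pCons ishom_0[OF hom_phi2] phi2_pCons phi1_pCons ishom_0[OF hom_phi1] ishom_1[OF hom_phi1] ishom_1[OF hom_phi2])
lemma psi_Y: "psi z varY = sY"
  by (simp add: psi_def varY_def map_poly_pCons ishom_0[OF hom_phi2] phi2_pCons phi1_pCons ishom_0[OF hom_phi1] ishom_1[OF hom_phi1] ishom_1[OF hom_phi2])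
lemma psi_Z: "psi z varZ = sZ z"
  by (simp add: psi_def varZ_def map_poly_pCons ishom_0[OF hom_phi2] phi2_pCons phi1_pCons ishom_0[OF hom_phi1] ishom_1[OF hom_phi1] ishom_1[OF hom_phi2])

lemma psi_fp: assumes "z ^ c = 1" shows "psi z fp = 0"
proof -
  have "psi z fp = sX ^ a * sY ^ b - sZ z ^ c"
    unfolding fp_def by (simp add: ishom_diff[OF hom_psi] ishom_mult[OF hom_psi] ishom_power[OF hom_psi] psi_X psi_Y psi_Z)
  also have "\<dots> = 0" using assms by (simp add: single_pow Poly_Mapping.mult_single algebra_simps)
  finally show ?thesis .
qed

lemma psi_dvd: assumes "z ^ c = 1" "fp dvd h" shows "psi z h = 0"
proof -
  obtain k where "h = fp * k" using assms(2) by (auto simp: dvd_def)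
  then show ?thesis using psi_fp[OF assms(1)] by (simp add: ishom_mult[OF hom_psi])
qed

end

locale lndD = abc +
  fixes D :: "cpoly3 \<Rightarrow> cpoly3"
  assumes lnd: "quot_LND fp D"
begin

lemma deriv: "quot_derivation fp D" using lnd by (simp add: quot_LND_def)

definition Q :: "complex \<Rightarrow> cpoly3 \<Rightarrow> lp" where "Q z g = psi z (D g)"

context
  fixes z :: complex assumes z: "z ^ c = 1"
begin

lemma Q_cong: "fp dvd (g - h) \<Longrightarrow> Q z g = Q z h"
proof -
  assume "fp dvd (g - h)"
  then have "fp dvd (D g - D h)" using deriv unfolding quot_derivation_def by blast
  then have "psi z (D g - D h) = 0" using psi_dvd[OF z] by blast
  then show ?thesis by (simp add: Q_def ishom_diff[OF hom_psi])
qed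

lemma Q_add: "Q z (g + h) = Q z g + Q z h"
proof -
  have "fp dvd (D (g + h) - (D g + D h))" using deriv unfolding quot_derivation_def by blast
  then have "psi z (D (g + h) - (D g + D h)) = 0" using psi_dvd[OF z] by blast
  then show ?thesis by (simp add: Q_def ishom_diff[OF hom_psi] ishom_add[OF hom_psi])
qed

lemma Q_mult: "Q z (g * h) = psi z g * Q z h + psi z h * Q z g"
proof -
  have "fp dvd (D (g * h) - (g * D h + h * D g))" using deriv unfolding quot_derivation_def by blast
  then have "psi z (D (g * h) - (g * D h + h * D g)) = 0" using psi_dvd[OF z] by blast
  then show ?thesis by (simp add: Q_def ishom_diff[OF hom_psi] ishom_add[OF hom_psi] ishom_mult[OF hom_psi])
qed

lemma Q_0: "Q z 0 = 0"
  using Q_add[of 0 0] by simp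

lemma Q_1: "Q z 1 = 0"
  using Q_mult[of 1 1] by (simp add: ishom_1[OF hom_psi])

lemma Q_const: "Q z (const3 \<alpha>) = 0"
proof -
  have "fp dvd (D (const3 \<alpha> * 1) - const3 \<alpha> * D 1)" using deriv unfolding quot_derivation_def by blast
  then have "psi z (D (const3 \<alpha> * 1) - const3 \<alpha> * D 1) = 0" using psi_dvd[OF z] by blast
  then show ?thesis using Q_1 by (simp add: Q_def ishom_diff[OF hom_psi] ishom_mult[OF hom_psi])
qed

lemma Q_uminus: "Q z (- g) = - Q z g"
  using Q_add[of g "-g"] Q_0 by (simp add: add_eq_0_iff)

lemma Q_diff: "Q z (g - h) = Q z g - Q z h"
  using Q_add[of g "-h"] Q_uminus[of h] by simp

lemma Q_pow: "Q z (g ^ Suc n) = of_nat (Suc n) * psi z g ^ n * Q z g"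
proof (induction n)
  case 0 then show ?case by simp
next
  case (Suc n)
  have "Q z (g ^ Suc (Suc n)) = Q z (g * g ^ Suc n)" by simp
  also have "\<dots> = psi z g * Q z (g ^ Suc n) + psi z (g ^ Suc n) * Q z g" by (rule Q_mult)
  also have "\<dots> = psi z g * (of_nat (Suc n) * psi z g ^ n * Q z g) + psi z g ^ Suc n * Q z g"
    unfolding Suc.IH ishom_power[OF hom_psi] ..
  also have "\<dots> = of_nat (Suc (Suc n)) * psi z g ^ Suc n * Q z g"
    by (simp add: algebra_simps)
  finally show ?case .
qed

lemma Q_fp: "Q z fp = 0"
  using Q_cong[of fp 0] Q_0 by simp

end

definition Es :: "lp \<Rightarrow> lp" where "Es = Ew (\<lambda>k. of_int (fst k))"
definition Et :: "lp \<Rightarrow> lp" where "Et = Ew (\<lambda>k. of_int (snd k))"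

definition U :: "complex \<Rightarrow> lp" where "U z = Q z varX * Poly_Mapping.single (- int c, 0) (1 / of_nat c)"
definition V :: "complex \<Rightarrow> lp" where "V z = Q z varY * Poly_Mapping.single (0, - int c) (1 / of_nat c)"
definition Dop :: "complex \<Rightarrow> lp \<Rightarrow> lp" where "Dop z F = U z * Es F + V z * Et F"

lemma Dop_add: "Dop z (F + G) = Dop z F + Dop z G"
  by (simp add: Dop_def Es_def Et_def Ew_add algebra_simps)

lemma Dop_mult: "Dop z (F * G) = Dop z F * G + F * Dop z G"
  by (simp add: Dop_def Es_def Et_def Ew_mult algebra_simps)

lemma of_int_single: "(of_int n :: lp) = Poly_Mapping.single 0 (of_int n)" by simp
lemma of_nat_single: "(of_nat n :: lp) = Poly_Mapping.single 0 (of_nat n)" by simp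

lemma Dop_single: "Dop z (Poly_Mapping.single k \<alpha>) = U z * Poly_Mapping.single k (of_int (fst k) * \<alpha>) + V z * Poly_Mapping.single k (of_int (snd k) * \<alpha>)"
  unfolding Dop_def Es_def Et_def Ew_single ..

context
  fixes z :: complex assumes z: "z ^ c = 1"
begin

lemma QZ_eq: "Q z varZ = sZ z * (of_nat a * U z + of_nat b * V z)"
proof -
  obtain a1 b1 c1 where ab: "a = Suc a1" "b = Suc b1" "c = Suc c1" using a2 b2 c2 by (metis Suc_le_D numeral_2_eq_2)
  have "0 = Q z fp" using Q_fp[OF z] by simp
  also have "\<dots> = Q z (varX ^ a * varY ^ b) - Q z (varZ ^ c)" unfolding fp_def by (rule Q_diff[OF z])
  also have "\<dots> = sX ^ a * (of_nat b * sY ^ b1 * Q z varY) + sY ^ b * (of_nat a * sX ^ a1 * Q z varX) - of_nat c * sZ z ^ c1 * Q z varZ"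
  proof -
    have qa: "Q z (varX ^ a) = of_nat a * sX ^ a1 * Q z varX"
    proof -
      have "Q z (varX ^ Suc a1) = of_nat (Suc a1) * psi z varX ^ a1 * Q z varX" by (rule Q_pow[OF z])
      then show ?thesis using ab(1) psi_X by simp
    qed
    have qb: "Q z (varY ^ b) = of_nat b * sY ^ b1 * Q z varY"
    proof -
      have "Q z (varY ^ Suc b1) = of_nat (Suc b1) * psi z varY ^ b1 * Q z varY" by (rule Q_pow[OF z])
      then show ?thesis using ab(2) psi_Y by simp
    qed
    have qc: "Q z (varZ ^ c) = of_nat c * sZ z ^ c1 * Q z varZ"
    proof -
      have "Q z (varZ ^ Suc c1) = of_nat (Suc c1) * psi z varZ ^ c1 * Q z varZ" by (rule Q_pow[OF z])
      then show ?thesis using ab(3) psi_Z by simp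
    qed
    show ?thesis unfolding Q_mult[OF z] qa qb qc ishom_power[OF hom_psi] psi_X psi_Y by simp
  qed
  finally have rel: "of_nat c * sZ z ^ c1 * Q z varZ = sX ^ a * (of_nat b * sY ^ b1 * Q z varY) + sY ^ b * (of_nat a * sX ^ a1 * Q z varX)"
    by simp
  define M where "M = sZ z * Poly_Mapping.single (- (int a * int c), - (int b * int c)) (1 / of_nat c)"
  have cpos: "(of_nat c :: complex) \<noteq> 0" using c2 by simp
  have zc: "z ^ c1 * z = 1" using z ab by (simp add: mult.commute)
  have k1: "of_nat c * sZ z ^ c1 * M = 1"
  proof -
    have "of_nat c * sZ z ^ c1 * M = Poly_Mapping.single (int c1 * int a + int a - int a * int c, int c1 * int b + int b - int b * int c) (of_nat c * z ^ c1 * z * (1 / of_nat c))"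
      unfolding M_def of_nat_single by (simp add: single_pow Poly_Mapping.mult_single algebra_simps del: Poly_Mapping.single_of_nat)
    also have "\<dots> = Poly_Mapping.single 0 1"
    proof -
      have v: "of_nat c * z ^ c1 * z * (1 / of_nat c) = (1::complex)" using cpos zc by (simp add: field_simps)
      have e1: "int c1 * int a + int a - int a * int c = 0" "int c1 * int b + int b - int b * int c = 0"
        using ab(3) by (simp_all add: algebra_simps)
      show ?thesis unfolding v e1 zero_prod_def ..
    qed
    finally show ?thesis by simp
  qed
  have k2: "sX ^ a * sY ^ b1 * M = sZ z * Poly_Mapping.single (0, - int c) (1 / of_nat c)"
  proof -
    have "sX ^ a * sY ^ b1 * M = Poly_Mapping.single (int a * int c + int a - int a * int c, int b1 * int c + int b - int b * int c) (z * (1 / of_nat c))"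
      unfolding M_def by (simp add: single_pow Poly_Mapping.mult_single algebra_simps)
    also have "\<dots> = sZ z * Poly_Mapping.single (0, - int c) (1 / of_nat c)"
      using ab(2) by (simp add: Poly_Mapping.mult_single algebra_simps)
    finally show ?thesis .
  qed
  have k3: "sY ^ b * sX ^ a1 * M = sZ z * Poly_Mapping.single (- int c, 0) (1 / of_nat c)"
  proof -
    have "sY ^ b * sX ^ a1 * M = Poly_Mapping.single (int a1 * int c + int a - int a * int c, int b * int c + int b - int b * int c) (z * (1 / of_nat c))"
      unfolding M_def by (simp add: single_pow Poly_Mapping.mult_single algebra_simps)
    also have "\<dots> = sZ z * Poly_Mapping.single (- int c, 0) (1 / of_nat c)"
      using ab(1) by (simp add: Poly_Mapping.mult_single algebra_simps)
    finally show ?thesis .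
  qed
  have "Q z varZ = (of_nat c * sZ z ^ c1 * M) * Q z varZ" using k1 by simp
  also have "\<dots> = M * (of_nat c * sZ z ^ c1 * Q z varZ)" by (simp add: algebra_simps)
  also have "\<dots> = of_nat b * (sX ^ a * sY ^ b1 * M) * Q z varY + of_nat a * (sY ^ b * sX ^ a1 * M) * Q z varX"
    unfolding rel by (simp add: algebra_simps)
  also have "\<dots> = sZ z * (of_nat a * U z + of_nat b * V z)"
    unfolding k2 k3 U_def V_def by (simp add: algebra_simps)
  finally show ?thesis .
qed

lemma Dop_X: "Dop z sX = Q z varX"
proof -
  have "Poly_Mapping.single (- int c, 0) (1 / of_nat c) * Poly_Mapping.single (int c, 0) (of_nat c) = (1::lp)"
    using c2 by (simp add: Poly_Mapping.mult_single zero_prod_def[symmetric])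
  then show ?thesis by (simp add: Dop_single U_def mult.assoc)
qed

lemma Dop_Y: "Dop z sY = Q z varY"
proof -
  have "Poly_Mapping.single (0, - int c) (1 / of_nat c) * Poly_Mapping.single (0, int c) (of_nat c) = (1::lp)"
    using c2 by (simp add: Poly_Mapping.mult_single zero_prod_def[symmetric])
  then show ?thesis by (simp add: Dop_single V_def mult.assoc)
qed

lemma Dop_Z: "Dop z (sZ z) = Q z varZ"
proof -
  have "Poly_Mapping.single (int a, int b) (of_nat a * z) = of_nat a * sZ z"
    "Poly_Mapping.single (int a, int b) (of_nat b * z) = of_nat b * sZ z"
    unfolding of_nat_single by (simp_all add: Poly_Mapping.mult_single del: Poly_Mapping.single_of_nat)
  then show ?thesis unfolding QZ_eq by (simp add: Dop_single algebra_simps)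
qed

lemma Dop_const: "Dop z (Poly_Mapping.single 0 \<alpha>) = 0"
  by (simp add: Dop_single)

lemma Q_Dop: "Q z g = Dop z (psi z g)"
proof (induction g rule: cpoly3_induct)
  case (1 \<alpha>) then show ?case by (simp add: Q_const[OF z] psi_const Dop_const)
next
  case (2 g h) then show ?case by (simp add: Q_add[OF z] ishom_add[OF hom_psi] Dop_add)
next
  case (3 g) then show ?case by (simp add: Q_mult[OF z] ishom_mult[OF hom_psi] Dop_mult psi_X Dop_X algebra_simps)
next
  case (4 g) then show ?case by (simp add: Q_mult[OF z] ishom_mult[OF hom_psi] Dop_mult psi_Y Dop_Y algebra_simps)
next
  case (5 g) then show ?case by (simp add: Q_mult[OF z] ishom_mult[OF hom_psi] Dop_mult psi_Z Dop_Z algebra_simps)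
qed

lemma psi_Dpow: "psi z ((D ^^ n) g) = (Dop z ^^ n) (psi z g)"
proof (induction n)
  case 0 then show ?case by simp
next
  case (Suc n)
  have "psi z ((D ^^ Suc n) g) = Q z ((D ^^ n) g)" by (simp add: Q_def)
  then show ?case using Q_Dop Suc by simp
qed

end
end



definition omg :: "nat \<Rightarrow> complex" where "omg c = cis (2 * pi / real c)"

lemma omg_pow_eq1:
  assumes "c \<ge> 1" shows "omg c ^ m = 1 \<longleftrightarrow> c dvd m"
proof
  assume h: "omg c ^ m = 1"
  have "omg c ^ m = cis (real m * (2 * pi / real c))" by (simp add: omg_def DeMoivre)
  then have "cos (real m * (2 * pi / real c)) = 1" using h by (metis cis.sel(1) one_complex.sel(1))
  then obtain n :: int where n: "real m * (2 * pi / real c) = real_of_int n * 2 * pi" using cos_one_2pi_int by blast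
  have "real m = real_of_int n * real c" using n assms by (simp add: field_simps)
  then have "int m = n * int c" by (metis of_int_eq_iff of_int_mult of_int_of_nat_eq)
  then have "int c dvd int m" by simp
  then show "c dvd m" by simp
next
  assume "c dvd m"
  then obtain q where q: "m = c * q" by auto
  have "omg c ^ m = cis (real m * (2 * pi / real c))" by (simp add: omg_def DeMoivre)
  also have "\<dots> = cis (2 * pi * real q)" using q assms by (simp add: field_simps)
  also have "\<dots> = 1" by (rule cis_multiple_2pi) simp
  finally show "omg c ^ m = 1" .
qed

lemma omg_sum:
  assumes "c \<ge> 1" shows "(\<Sum>l<c. omg c ^ (l * m)) = (if c dvd m then of_nat c else 0)"
proof (cases "c dvd m")
  case True
  then have "omg c ^ (l * m) = 1" for l using omg_pow_eq1[OF assms] by (simp add: power_mult[symmetric] mult.commute[of l])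
  then show ?thesis using True by simp
next
  case False
  let ?x = "omg c ^ m"
  have x1: "?x \<noteq> 1" using False omg_pow_eq1[OF assms] by simp
  have xc: "?x ^ c = 1" using omg_pow_eq1[OF assms] by (simp add: power_mult[symmetric] mult.commute[of m])
  have "(\<Sum>l<c. omg c ^ (l * m)) = (\<Sum>l<c. ?x ^ l)" by (simp add: power_mult[symmetric] mult.commute[of _ m])
  also have "\<dots> = 0" using geometric_sum[OF x1, of c] xc by simp
  finally show ?thesis using False by simp
qed

lemma dvd_shift_iff:
  assumes "r < (c::nat)" shows "c dvd (k + (c - r)) \<longleftrightarrow> k mod c = r"
proof -
  have cpos: "c > 0" using assms by simp
  have "c dvd (k + (c - r)) \<longleftrightarrow> (k mod c + (c - r)) mod c = 0" by (simp add: dvd_eq_mod_eq_0 mod_add_left_eq)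
  also have "\<dots> \<longleftrightarrow> k mod c = r"
  proof (cases "k mod c + (c - r) < c")
    case True
    then show ?thesis using assms by auto
  next
    case False
    have km: "k mod c < c" using cpos by simp
    have "(k mod c + (c - r)) mod c = (k mod c + (c - r) - c) mod c" using False by (simp add: le_mod_geq)
    also have "\<dots> = k mod c - r"
    proof -
      have e: "k mod c + (c - r) - c = k mod c - r" using assms km False by linarith
      show ?thesis unfolding e using km by (intro mod_less) linarith
    qed
    finally have "(k mod c + (c - r)) mod c = k mod c - r" .
    moreover note km
    ultimately show ?thesis using False assms by auto
  qed
  finally show ?thesis .
qed

lemma dft:
  assumes c: "c \<ge> 1" and S: "finite S" and r: "r < c"
    and h: "\<forall>l<c. (\<Sum>k\<in>S. \<gamma> k * omg c ^ (l * k)) = 0"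
  shows "(\<Sum>k\<in>{k\<in>S. k mod c = r}. \<gamma> k) = 0"
proof -
  have "0 = (\<Sum>l<c. omg c ^ (l * (c - r)) * (\<Sum>k\<in>S. \<gamma> k * omg c ^ (l * k)))" using h by simp
  also have "\<dots> = (\<Sum>k\<in>S. \<gamma> k * (\<Sum>l<c. omg c ^ (l * (k + (c - r)))))"
    by (simp add: sum_distrib_left sum_distrib_right algebra_simps power_add[symmetric] sum.swap[of _ S])
  also have "\<dots> = (\<Sum>k\<in>S. \<gamma> k * (if k mod c = r then of_nat c else 0))"
    using omg_sum[OF c] dvd_shift_iff[OF r] by simp
  also have "\<dots> = of_nat c * (\<Sum>k\<in>{k\<in>S. k mod c = r}. \<gamma> k)"
    using S by (simp add: sum.inter_filter[symmetric] sum_distrib_left mult.commute if_distrib cong: if_cong)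
  finally show ?thesis using c by simp
qed


lemma sum_single_nonzero:
  assumes "finite S" "k0 \<in> S" "\<forall>k\<in>S. \<beta> k \<noteq> 0 \<longrightarrow> k = k0"
  shows "(\<Sum>k\<in>S. \<beta> k * (f k :: complex)) = \<beta> k0 * f k0"
proof -
  have "(\<Sum>k\<in>S. \<beta> k * f k) = \<beta> k0 * f k0 + (\<Sum>k\<in>S - {k0}. \<beta> k * f k)"
    using assms by (simp add: sum.remove)
  also have "(\<Sum>k\<in>S - {k0}. \<beta> k * f k) = 0" using assms(3) by (intro sum.neutral) auto
  finally show ?thesis by simp
qed

lemma le_mult_int: "(i::nat) \<noteq> 0 \<Longrightarrow> int c \<le> int c * int i"
proof -
  assume "i \<noteq> 0" then have "c \<le> c * i" by simp
  then show ?thesis by (metis of_nat_le_iff of_nat_mult)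
qed

lemma caseA:
  fixes a c :: nat and eA :: int and u bA bC :: "nat \<Rightarrow> complex"
  assumes a2: "a \<ge> 2" and c2: "c \<ge> 2" and lz: "lz < c" "u lz \<noteq> 0"
    and H1: "\<exists>i::nat. u lz * of_int (int c + int i * eA) = 0"
    and SA: "finite SA" and H3: "\<forall>l<c. of_nat c * u l = (\<Sum>k\<in>SA. bA k * omg c ^ (l * k))"
    and K1: "\<forall>k\<in>SA. bA k \<noteq> 0 \<longrightarrow> (\<exists>i::nat. int c + eA = int c * int i + int a * int k)"
    and SC: "finite SC" and H5: "\<forall>l<c. omg c ^ l * (of_nat a * u l) = (\<Sum>k\<in>SC. bC k * omg c ^ (l * k))"
    and K3: "\<forall>k\<in>SC. bC k \<noteq> 0 \<longrightarrow> (\<exists>i::nat. int a + eA = int c * int i + int a * int k)"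
  shows False
proof -
  obtain i where i: "u lz * of_int (int c + int i * eA) = 0" using H1 by blast
  then have "(of_int (int c + int i * eA) :: complex) = 0" using lz(2) by (meson mult_eq_0_iff)
  then have ie: "int c + int i * eA = 0" by (simp only: of_int_eq_0_iff)
  then have "i \<ge> 1" using c2 by (cases i) auto
  then have i1: "int i \<ge> 1" by simp
  have en: "eA < 0"
  proof (rule ccontr)
    assume "\<not> eA < 0"
    then have "int i * eA \<ge> 0" by simp
    then show False using ie c2 by linarith
  qed
  have "int i * eA \<le> 1 * eA" using i1 en by (intro mult_right_mono_neg) auto
  then have eAb: "eA \<le> -1" "eA \<ge> - int c" using ie en by linarith+
  have "\<exists>k0\<in>SA. bA k0 \<noteq> 0"
  proof (rule ccontr)
    assume "\<not> ?thesis"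
    then have "(\<Sum>k\<in>SA. bA k * omg c ^ (lz * k)) = 0" by (intro sum.neutral) auto
    then show False using H3[rule_format, OF lz(1)] lz c2 by simp
  qed
  then obtain k0 where k0: "k0 \<in> SA" "bA k0 \<noteq> 0" by blast
  obtain i0 where i0: "int c + eA = int c * int i0 + int a * int k0" using K1 k0 by blast
  have "i0 = 0"
  proof (rule ccontr)
    assume "i0 \<noteq> 0"
    then have "int c * int i0 \<ge> int c" by (rule le_mult_int)
    moreover have "int a * int k0 \<ge> 0" by simp
    ultimately show False using i0 eAb by linarith
  qed
  then have ak0: "int a * int k0 = int c + eA" using i0 by simp
  have uniq: "\<forall>k\<in>SA. bA k \<noteq> 0 \<longrightarrow> k = k0"
  proof (intro ballI impI)
    fix k assume "k \<in> SA" "bA k \<noteq> 0"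
    then obtain i' where i': "int c + eA = int c * int i' + int a * int k" using K1 by blast
    have "i' = 0"
    proof (rule ccontr)
      assume "i' \<noteq> 0"
      then have "int c * int i' \<ge> int c" by (rule le_mult_int)
      moreover have "int a * int k \<ge> 0" by simp
      ultimately show False using i' eAb by linarith
    qed
    then have "int c + eA = int a * int k" using i' by simp
    then have "int a * int k = int a * int k0" using ak0 by linarith
    then show "k = k0" using a2 by auto
  qed
  define B where "B = bA k0"
  have uform: "of_nat c * u l = B * omg c ^ (l * k0)" if "l < c" for l
    using H3 that sum_single_nonzero[OF SA k0(1) uniq] B_def by simp
  have B0: "B \<noteq> 0" using uform[OF lz(1)] lz c2 by auto
  define S where "S = insert (Suc k0) SC"
  define \<gamma> where "\<gamma> k = (if k \<in> SC then bC k else 0) - (if k = Suc k0 then of_nat a * B / of_nat c else 0)" for k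
  have Sfin: "finite S" using SC by (simp add: S_def)
  have cz: "(of_nat c :: complex) \<noteq> 0" using c2 by simp
  have "\<forall>l<c. (\<Sum>k\<in>S. \<gamma> k * omg c ^ (l * k)) = 0"
  proof (intro allI impI)
    fix l assume l: "l < c"
    have "(\<Sum>k\<in>S. \<gamma> k * omg c ^ (l * k)) = (\<Sum>k\<in>S. (if k \<in> SC then bC k else 0) * omg c ^ (l * k))
        - (\<Sum>k\<in>S. (if k = Suc k0 then of_nat a * B / of_nat c else 0) * omg c ^ (l * k))"
      by (simp add: \<gamma>_def sum_subtractf left_diff_distrib)
    also have "(\<Sum>k\<in>S. (if k \<in> SC then bC k else 0) * omg c ^ (l * k)) = (\<Sum>k\<in>SC. bC k * omg c ^ (l * k))"
      using SC by (intro sum.mono_neutral_cong_right) (auto simp: S_def)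
    also have "(\<Sum>k\<in>S. (if k = Suc k0 then of_nat a * B / of_nat c else 0) * omg c ^ (l * k)) = of_nat a * B / of_nat c * omg c ^ (l * Suc k0)"
    proof -
      have "(\<Sum>k\<in>S. (if k = Suc k0 then of_nat a * B / of_nat c else 0) * omg c ^ (l * k))
          = (\<Sum>k\<in>S. if k = Suc k0 then of_nat a * B / of_nat c * omg c ^ (l * k) else 0)"
        by (rule sum.cong) auto
      also have "\<dots> = of_nat a * B / of_nat c * omg c ^ (l * Suc k0)"
        using Sfin by (simp add: S_def)
      finally show ?thesis .
    qed
    also have "(\<Sum>k\<in>SC. bC k * omg c ^ (l * k)) = omg c ^ l * (of_nat a * u l)" using H5 l by simp
    also have "of_nat a * B / of_nat c * omg c ^ (l * Suc k0) = omg c ^ l * (of_nat a * u l)"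
    proof -
      have "u l = B * omg c ^ (l * k0) / of_nat c" using uform[OF l] cz by (simp add: field_simps)
      then show ?thesis by (simp add: power_add algebra_simps)
    qed
    finally show "(\<Sum>k\<in>S. \<gamma> k * omg c ^ (l * k)) = 0" by simp
  qed
  from dft[OF _ Sfin _ this, of "Suc k0 mod c"] c2
  have dsum: "(\<Sum>k\<in>{k\<in>S. k mod c = Suc k0 mod c}. \<gamma> k) = 0" by simp
  have "\<exists>k3\<in>SC. bC k3 \<noteq> 0 \<and> k3 mod c = Suc k0 mod c"
  proof (rule ccontr)
    assume nk: "\<not> ?thesis"
    let ?F = "{k\<in>S. k mod c = Suc k0 mod c}"
    have "(\<Sum>k\<in>?F. \<gamma> k) = (\<Sum>k\<in>?F. - (if k = Suc k0 then of_nat a * B / of_nat c else 0))"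
    proof (rule sum.cong)
      fix k assume "k \<in> ?F"
      then have "k \<in> SC \<Longrightarrow> bC k = 0" using nk by auto
      then show "\<gamma> k = - (if k = Suc k0 then of_nat a * B / of_nat c else 0)" by (auto simp: \<gamma>_def)
    qed simp
    also have "\<dots> = - (of_nat a * B / of_nat c)"
      using Sfin by (simp add: sum_negf S_def)
    finally have "of_nat a * B / of_nat c = 0" using dsum by simp
    then show False using B0 cz a2 by simp
  qed
  then obtain k3 where k3: "k3 \<in> SC" "bC k3 \<noteq> 0" "k3 mod c = Suc k0 mod c" by blast
  obtain i1 where i1: "int a + eA = int c * int i1 + int a * int k3" using K3 k3 by blast
  have eq: "int a * int (Suc k0) - int a * int k3 = int c * (int i1 + 1)"
    using i1 ak0 by (simp add: algebra_simps)
  have lt: "k3 < Suc k0"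
  proof (rule ccontr)
    assume "\<not> k3 < Suc k0"
    then have "int a * int (Suc k0) \<le> int a * int k3" by (intro mult_left_mono) auto
    moreover have "int c * (int i1 + 1) > 0" using c2 by simp
    ultimately show False using eq by linarith
  qed
  have "c dvd (Suc k0 - k3)" using k3(3) lt mod_eq_dvd_iff_nat[of k3 "Suc k0" c] by simp
  moreover have "Suc k0 - k3 > 0" using lt by simp
  ultimately have "c \<le> Suc k0 - k3" by (simp add: dvd_imp_le)
  then have "k0 \<ge> c - 1" by simp
  moreover have "int a * int k0 \<le> int c - 1" using ak0 eAb by linarith
  moreover have "int a * int k0 \<ge> 2 * int k0" using a2 by (intro mult_right_mono) auto
  ultimately show False using c2 by linarith
qed


lemma core:
  fixes a b c :: nat and e1 e2 :: int and u v \<beta>1 \<beta>2 \<beta>3 :: "nat \<Rightarrow> complex"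
  assumes a2: "a \<ge> 2" and b2: "b \<ge> 2" and c2: "c \<ge> 2"
    and H1: "\<forall>l<c. \<exists>i::nat. u l * of_int (int c + int i * e1) + v l * of_int (int i * e2) = 0"
    and H2: "\<forall>l<c. \<exists>j::nat. u l * of_int (int j * e1) + v l * of_int (int c + int j * e2) = 0"
    and S1: "finite S1" and H3: "\<forall>l<c. of_nat c * u l = (\<Sum>k\<in>S1. \<beta>1 k * omg c ^ (l * k))"
    and K1: "\<forall>k\<in>S1. \<beta>1 k \<noteq> 0 \<longrightarrow> (\<exists>i j::nat. int c + e1 = int c * int i + int a * int k \<and> e2 = int c * int j + int b * int k)"
    and S2: "finite S2" and H4: "\<forall>l<c. of_nat c * v l = (\<Sum>k\<in>S2. \<beta>2 k * omg c ^ (l * k))"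
    and K2: "\<forall>k\<in>S2. \<beta>2 k \<noteq> 0 \<longrightarrow> (\<exists>i j::nat. e1 = int c * int i + int a * int k \<and> int c + e2 = int c * int j + int b * int k)"
    and S3: "finite S3" and H5: "\<forall>l<c. omg c ^ l * (of_nat a * u l + of_nat b * v l) = (\<Sum>k\<in>S3. \<beta>3 k * omg c ^ (l * k))"
    and K3: "\<forall>k\<in>S3. \<beta>3 k \<noteq> 0 \<longrightarrow> (\<exists>i j::nat. int a + e1 = int c * int i + int a * int k \<and> int b + e2 = int c * int j + int b * int k)"
    and NZ: "\<exists>l<c. u l \<noteq> 0 \<or> v l \<noteq> 0"
  shows False
proof (cases "\<exists>l<c. u l \<noteq> 0")
  case True
  then obtain l1 where l1: "l1 < c" "u l1 \<noteq> 0" by blast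
  show False
  proof (cases "\<exists>l<c. v l \<noteq> 0")
    case True
    then obtain l2 where l2: "l2 < c" "v l2 \<noteq> 0" by blast
    have "\<exists>k\<in>S1. \<beta>1 k \<noteq> 0"
    proof (rule ccontr)
      assume "\<not> ?thesis"
      then have "(\<Sum>k\<in>S1. \<beta>1 k * omg c ^ (l1 * k)) = 0" by (intro sum.neutral) auto
      then show False using H3[rule_format, OF l1(1)] l1 c2 by simp
    qed
    then have e2: "e2 \<ge> 0" using K1 by fastforce
    have "\<exists>k\<in>S2. \<beta>2 k \<noteq> 0"
    proof (rule ccontr)
      assume "\<not> ?thesis"
      then have "(\<Sum>k\<in>S2. \<beta>2 k * omg c ^ (l2 * k)) = 0" by (intro sum.neutral) auto
      then show False using H4[rule_format, OF l2(1)] l2 c2 by simp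
    qed
    then have e1: "e1 \<ge> 0" using K2 by fastforce
    obtain i where i: "u l1 * of_int (int c + int i * e1) + v l1 * of_int (int i * e2) = 0" using H1 l1 by blast
    obtain j where j: "u l1 * of_int (int j * e1) + v l1 * of_int (int c + int j * e2) = 0" using H2 l1 by blast
    define L where "L = u l1 * of_int e1 + v l1 * of_int e2"
    have "of_nat c * u l1 + of_nat i * L = u l1 * of_int (int c + int i * e1) + v l1 * of_int (int i * e2)"
      by (simp add: L_def algebra_simps)
    then have cu: "of_nat c * u l1 = - (of_nat i * L)" using i by (simp add: eq_neg_iff_add_eq_0)
    have "of_nat c * v l1 + of_nat j * L = u l1 * of_int (int j * e1) + v l1 * of_int (int c + int j * e2)"
      by (simp add: L_def algebra_simps)
    then have cv: "of_nat c * v l1 = - (of_nat j * L)" using j by (simp add: eq_neg_iff_add_eq_0)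
    have "of_nat c * L = (of_nat c * u l1) * of_int e1 + (of_nat c * v l1) * of_int e2" by (simp add: L_def algebra_simps)
    also have "\<dots> = - (L * (of_nat i * of_int e1 + of_nat j * of_int e2))" unfolding cu cv by (simp add: algebra_simps)
    finally have h: "of_nat c * L = - (L * (of_nat i * of_int e1 + of_nat j * of_int e2))" .
    have "L * of_int (int c + int i * e1 + int j * e2) = of_nat c * L + L * (of_nat i * of_int e1 + of_nat j * of_int e2)"
      by (simp add: algebra_simps)
    then have "L * of_int (int c + int i * e1 + int j * e2) = 0" using h by simp
    moreover have "int c + int i * e1 + int j * e2 > 0" using c2 e1 e2 by (simp add: add_pos_nonneg)
    moreover have "(of_int (int c + int i * e1 + int j * e2) :: complex) \<noteq> 0"
      using calculation(2) by (simp only: of_int_eq_0_iff)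
    ultimately have "L = 0" by (meson mult_eq_0_iff)
    then have "of_nat c * u l1 = 0" using cu by simp
    then show False using l1 c2 by simp
  next
    case False
    then have v0: "\<forall>l<c. v l = 0" by auto
    show False
    proof (rule caseA[where a=a and c=c and lz=l1 and u=u and eA=e1 and SA=S1 and bA=\<beta>1 and SC=S3 and bC=\<beta>3, OF a2 c2 l1])
      show "\<exists>i::nat. u l1 * of_int (int c + int i * e1) = 0" using H1 l1 v0 by fastforce
      show "\<forall>k\<in>S1. \<beta>1 k \<noteq> 0 \<longrightarrow> (\<exists>i::nat. int c + e1 = int c * int i + int a * int k)" using K1 by blast
      show "\<forall>l<c. omg c ^ l * (of_nat a * u l) = (\<Sum>k\<in>S3. \<beta>3 k * omg c ^ (l * k))" using H5 v0 by simp
      show "\<forall>k\<in>S3. \<beta>3 k \<noteq> 0 \<longrightarrow> (\<exists>i::nat. int a + e1 = int c * int i + int a * int k)" using K3 by blast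
    qed (use S1 H3 S3 in auto)
  qed
next
  case False
  then have u0: "\<forall>l<c. u l = 0" by auto
  then obtain l1 where l1: "l1 < c" "v l1 \<noteq> 0" using NZ by blast
  show False
  proof (rule caseA[where a=b and c=c and lz=l1 and u=v and eA=e2 and SA=S2 and bA=\<beta>2 and SC=S3 and bC=\<beta>3, OF b2 c2 l1])
    show "\<exists>i::nat. v l1 * of_int (int c + int i * e2) = 0" using H2 l1 u0 by fastforce
    show "\<forall>k\<in>S2. \<beta>2 k \<noteq> 0 \<longrightarrow> (\<exists>i::nat. int c + e2 = int c * int i + int b * int k)" using K2 by blast
    show "\<forall>l<c. omg c ^ l * (of_nat b * v l) = (\<Sum>k\<in>S3. \<beta>3 k * omg c ^ (l * k))" using H5 u0 by simp
    show "\<forall>k\<in>S3. \<beta>3 k \<noteq> 0 \<longrightarrow> (\<exists>i::nat. int b + e2 = int c * int i + int b * int k)" using K3 by blast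
  qed (use S2 H4 S3 in auto)
qed


context lndD begin

lemma top_step:
  assumes U: "\<forall>k\<in>Poly_Mapping.keys (U z). k \<le> e" and V: "\<forall>k\<in>Poly_Mapping.keys (V z). k \<le> e"
    and F: "\<forall>k\<in>Poly_Mapping.keys F. k \<le> h"
  shows "(\<forall>k\<in>Poly_Mapping.keys (Dop z F). k \<le> e + h) \<and>
    Poly_Mapping.lookup (Dop z F) (e + h) = Poly_Mapping.lookup F h * (Poly_Mapping.lookup (U z) e * of_int (fst h) + Poly_Mapping.lookup (V z) e * of_int (snd h))"
proof -
  have Es: "\<forall>k\<in>Poly_Mapping.keys (Es F). k \<le> h" using F keys_Ew unfolding Es_def by blast
  have Et: "\<forall>k\<in>Poly_Mapping.keys (Et F). k \<le> h" using F keys_Ew unfolding Et_def by blast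
  have k1: "\<forall>k\<in>Poly_Mapping.keys (U z * Es F). k \<le> e + h" by (rule keys_mult_le[OF U Es])
  have k2: "\<forall>k\<in>Poly_Mapping.keys (V z * Et F). k \<le> e + h" by (rule keys_mult_le[OF V Et])
  have "\<forall>k\<in>Poly_Mapping.keys (Dop z F). k \<le> e + h"
    using k1 k2 Poly_Mapping.keys_add[of "U z * Es F" "V z * Et F"] unfolding Dop_def by blast
  moreover have "Poly_Mapping.lookup (Dop z F) (e + h) = Poly_Mapping.lookup F h * (Poly_Mapping.lookup (U z) e * of_int (fst h) + Poly_Mapping.lookup (V z) e * of_int (snd h))"
    unfolding Dop_def Poly_Mapping.lookup_add lookup_mult_top[OF U Es] lookup_mult_top[OF V Et]
    by (simp add: Es_def Et_def lookup_Ew algebra_simps)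
  ultimately show ?thesis by blast
qed

lemma top_iter:
  assumes U: "\<forall>k\<in>Poly_Mapping.keys (U z). k \<le> e" and V: "\<forall>k\<in>Poly_Mapping.keys (V z). k \<le> e"
  shows "(\<forall>k\<in>Poly_Mapping.keys ((Dop z ^^ n) (Poly_Mapping.single h 1)). k \<le> (fst h + int n * fst e, snd h + int n * snd e)) \<and>
    Poly_Mapping.lookup ((Dop z ^^ n) (Poly_Mapping.single h 1)) (fst h + int n * fst e, snd h + int n * snd e) =
    (\<Prod>i<n. Poly_Mapping.lookup (U z) e * of_int (fst h + int i * fst e) + Poly_Mapping.lookup (V z) e * of_int (snd h + int i * snd e))"
proof (induction n)
  case 0 then show ?case by simp
next
  case (Suc n)
  let ?b = "(fst h + int n * fst e, snd h + int n * snd e)"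
  have eb: "e + ?b = (fst h + int (Suc n) * fst e, snd h + int (Suc n) * snd e)"
    by (cases e) (simp add: algebra_simps)
  from top_step[OF U V conjunct1[OF Suc.IH]] show ?case
    unfolding eb using conjunct2[OF Suc.IH] by simp
qed

lemma factor_zero:
  assumes z: "z ^ c = 1"
    and U: "\<forall>k\<in>Poly_Mapping.keys (U z). k \<le> e" and V: "\<forall>k\<in>Poly_Mapping.keys (V z). k \<le> e"
    and g: "psi z g = Poly_Mapping.single h 1"
  shows "\<exists>i::nat. Poly_Mapping.lookup (U z) e * of_int (fst h + int i * fst e) + Poly_Mapping.lookup (V z) e * of_int (snd h + int i * snd e) = 0"
proof -
  obtain n where "fp dvd (D ^^ n) g" using lnd by (auto simp: quot_LND_def)
  then have "psi z ((D ^^ n) g) = 0" using psi_dvd[OF z] by blast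
  then have "(Dop z ^^ n) (Poly_Mapping.single h 1) = 0" using psi_Dpow[OF z] g by simp
  then have "(\<Prod>i<n. Poly_Mapping.lookup (U z) e * of_int (fst h + int i * fst e) + Poly_Mapping.lookup (V z) e * of_int (snd h + int i * snd e)) = 0"
    using conjunct2[OF top_iter[OF U V, of n h]] by simp
  then show ?thesis by auto
qed

end


lemma lookup_mult_single: "Poly_Mapping.lookup ((F::lp) * Poly_Mapping.single k \<alpha>) m = \<alpha> * Poly_Mapping.lookup F (m - k)"
  by (simp add: mult.commute[of F] lookup_single_mult)

lemma lookup_of_nat_mult: "Poly_Mapping.lookup (of_nat n * (F::lp)) m = of_nat n * Poly_Mapping.lookup F m"
proof -
  have "(of_nat n :: lp) = Poly_Mapping.single 0 (of_nat n)" by simp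
  then show ?thesis by (simp only: lookup_single_mult diff_zero)
qed

context abc begin

lemma phi2_nz: "Poly_Mapping.lookup (phi2 q) (x, y) \<noteq> 0 \<Longrightarrow> \<exists>i j::nat. x = int c * int i \<and> y = int c * int j"
  using lookup_phi2_zero[of "(x,y)" q] by auto

lemma coeff_fp_high: "n \<ge> 1 \<Longrightarrow> coeff fp n = - (if n = c then 1 else 0)"
proof -
  assume n: "n \<ge> 1"
  have "degree (varX ^ a * varY ^ b) = 0"
  proof -
    have "degree (varX ^ a) = 0" "degree (varY ^ b) = 0"
      using degree_power_le[of varX a] degree_power_le[of varY b] by (simp_all add: varX_def varY_def)
    then show ?thesis using degree_mult_le[of "varX ^ a" "varY ^ b"] by simp
  qed
  then have "coeff (varX ^ a * varY ^ b) n = 0" using n by (intro coeff_eq_0) simp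
  moreover have "varZ ^ c = monom 1 c" by (simp add: varZ_def monom_altdef)
  ultimately show ?thesis by (simp add: fp_def coeff_monom)
qed

lemma reduce: "\<exists>h'. fp dvd (h - h') \<and> degree h' < c"
proof (induction "degree h" arbitrary: h rule: less_induct)
  case less
  show ?case
  proof (cases "degree h < c")
    case True then show ?thesis by (intro exI[of _ h]) simp
  next
    case False
    define d where "d = degree h - c"
    define h1 where "h1 = h + monom (lead_coeff h) d * fp"
    have dv: "fp dvd (h - h1)" by (simp add: h1_def)
    have "degree h1 \<le> degree h - 1"
    proof (rule degree_le, intro allI impI)
      fix i assume i: "degree h - 1 < i"
      then have i2: "i \<ge> degree h" by simp
      then have "\<not> i < d" by (simp add: d_def)
      moreover have "i - d \<ge> 1" using i2 False c2 by (simp add: d_def)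
      ultimately have "coeff h1 i = coeff h i - lead_coeff h * (if i - d = c then 1 else 0)"
        by (simp add: h1_def coeff_monom_mult coeff_fp_high)
      then show "coeff h1 i = 0"
        using i2 False by (cases "i = degree h") (auto simp: d_def coeff_eq_0)
    qed
    then have "degree h1 < degree h" using False c2 by linarith
    then obtain h' where "fp dvd (h1 - h')" "degree h' < c" using less by blast
    moreover have "h - h' = (h - h1) + (h1 - h')" by simp
    ultimately show ?thesis using dv by (metis dvd_add)
  qed
qed

lemma omg_c: "(omg c ^ l) ^ c = 1"
  using omg_pow_eq1[of c "l * c"] c2 by (simp add: power_mult[symmetric])

lemma kernel: assumes "\<forall>l<c. psi (omg c ^ l) h = 0" shows "fp dvd h"
proof -
  obtain h' where h': "fp dvd (h - h')" "degree h' < c" using reduce by blast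
  have p0: "psi (omg c ^ l) h' = 0" if "l < c" for l
  proof -
    have "psi (omg c ^ l) (h - h') = 0" using psi_dvd[OF omg_c h'(1)] .
    then show ?thesis using assms that by (simp add: ishom_diff[OF hom_psi])
  qed
  have "coeff h' k0 = 0" if k0: "k0 \<le> degree h'" for k0
  proof -
    have "Poly_Mapping.lookup (phi2 (coeff h' k0)) x = 0" for x
    proof -
      define m where "m = x + (int (k0 * a), int (k0 * b))"
      define \<beta> where "\<beta> k = Poly_Mapping.lookup (phi2 (coeff h' k)) (m - (int (k * a), int (k * b)))" for k
      have "\<forall>l<c. (\<Sum>k\<in>{..degree h'}. \<beta> k * omg c ^ (l * k)) = 0"
      proof (intro allI impI)
        fix l assume "l < c"
        then have "Poly_Mapping.lookup (psi (omg c ^ l) h') m = 0" using p0 by simp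
        then show "(\<Sum>k\<in>{..degree h'}. \<beta> k * omg c ^ (l * k)) = 0"
          unfolding lookup_psi \<beta>_def by (simp add: power_mult[symmetric] mult.commute)
      qed
      from dft[OF _ _ _ this, of k0] c2 k0 h'(2)
      have "(\<Sum>k\<in>{k\<in>{..degree h'}. k mod c = k0}. \<beta> k) = 0" by simp
      moreover have "{k\<in>{..degree h'}. k mod c = k0} = {k0}" using k0 h'(2) by auto
      ultimately have "\<beta> k0 = 0" by simp
      then show ?thesis by (simp add: \<beta>_def m_def)
    qed
    then have "phi2 (coeff h' k0) = 0" by (intro Poly_Mapping.poly_mapping_eqI) simp
    then show ?thesis by (rule phi2_inj)
  qed
  then have "h' = 0" by (metis leading_coeff_0_iff order_refl)
  then show ?thesis using h'(1) by simp
qed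

end


context lndD begin

lemma all_zero: "\<forall>l<c. U (omg c ^ l) = 0 \<and> V (omg c ^ l) = 0"
proof -
  define T where "T = (\<Union>l\<in>{..<c}. Poly_Mapping.keys (U (omg c ^ l)) \<union> Poly_Mapping.keys (V (omg c ^ l)))"
  have Tfin: "finite T" unfolding T_def by simp
  have "T = {}"
  proof (rule ccontr)
    assume Tne: "T \<noteq> {}"
    define e where "e = Max T"
    have eT: "e \<in> T" using Max_in[OF Tfin Tne] by (simp add: e_def)
    have Ub: "\<forall>k\<in>Poly_Mapping.keys (U (omg c ^ l)). k \<le> e" if "l < c" for l
      using that Max_ge[OF Tfin] unfolding e_def T_def by blast
    have Vb: "\<forall>k\<in>Poly_Mapping.keys (V (omg c ^ l)). k \<le> e" if "l < c" for l
      using that Max_ge[OF Tfin] unfolding e_def T_def by blast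
    define u where "u l = Poly_Mapping.lookup (U (omg c ^ l)) e" for l
    define v where "v l = Poly_Mapping.lookup (V (omg c ^ l)) e" for l
    define S1 where "S1 = {..degree (D varX)}"
    define S2 where "S2 = {..degree (D varY)}"
    define S3 where "S3 = {..degree (D varZ)}"
    define \<beta>1 where "\<beta>1 k = Poly_Mapping.lookup (phi2 (coeff (D varX) k)) ((int c + fst e, snd e) - (int (k * a), int (k * b)))" for k
    define \<beta>2 where "\<beta>2 k = Poly_Mapping.lookup (phi2 (coeff (D varY) k)) ((fst e, int c + snd e) - (int (k * a), int (k * b)))" for k
    define \<beta>3 where "\<beta>3 k = Poly_Mapping.lookup (phi2 (coeff (D varZ) k)) ((int a + fst e, int b + snd e) - (int (k * a), int (k * b)))" for k
    show False
    proof (rule core[OF a2 b2 c2, of u "fst e" v "snd e" S1 \<beta>1 S2 \<beta>2 S3 \<beta>3])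
      show "\<forall>l<c. \<exists>i::nat. u l * of_int (int c + int i * fst e) + v l * of_int (int i * snd e) = 0"
      proof (intro allI impI)
        fix l assume l: "l < c"
        from factor_zero[OF omg_c Ub[OF l] Vb[OF l], of varX "(int c, 0)"]
        show "\<exists>i::nat. u l * of_int (int c + int i * fst e) + v l * of_int (int i * snd e) = 0"
          by (simp add: psi_X u_def v_def)
      qed
      show "\<forall>l<c. \<exists>j::nat. u l * of_int (int j * fst e) + v l * of_int (int c + int j * snd e) = 0"
      proof (intro allI impI)
        fix l assume l: "l < c"
        from factor_zero[OF omg_c Ub[OF l] Vb[OF l], of varY "(0, int c)"]
        show "\<exists>j::nat. u l * of_int (int j * fst e) + v l * of_int (int c + int j * snd e) = 0"
          by (simp add: psi_Y u_def v_def)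
      qed
      show "finite S1" "finite S2" "finite S3" by (simp_all add: S1_def S2_def S3_def)
      show "\<forall>l<c. of_nat c * u l = (\<Sum>k\<in>S1. \<beta>1 k * omg c ^ (l * k))"
      proof (intro allI impI)
        fix l assume l: "l < c"
        have "Poly_Mapping.lookup (psi (omg c ^ l) (D varX)) (int c + fst e, snd e) = Poly_Mapping.lookup (Dop (omg c ^ l) sX) (int c + fst e, snd e)"
          using Dop_X[OF omg_c] by (simp add: Q_def)
        also have "\<dots> = of_nat c * u l"
          by (simp add: Dop_single lookup_mult_single u_def)
        finally show "of_nat c * u l = (\<Sum>k\<in>S1. \<beta>1 k * omg c ^ (l * k))"
          unfolding lookup_psi S1_def \<beta>1_def by (simp add: power_mult[symmetric] mult.commute)
      qed
      show "\<forall>l<c. of_nat c * v l = (\<Sum>k\<in>S2. \<beta>2 k * omg c ^ (l * k))"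
      proof (intro allI impI)
        fix l assume l: "l < c"
        have "Poly_Mapping.lookup (psi (omg c ^ l) (D varY)) (fst e, int c + snd e) = Poly_Mapping.lookup (Dop (omg c ^ l) sY) (fst e, int c + snd e)"
          using Dop_Y[OF omg_c] by (simp add: Q_def)
        also have "\<dots> = of_nat c * v l"
          by (simp add: Dop_single lookup_mult_single v_def)
        finally show "of_nat c * v l = (\<Sum>k\<in>S2. \<beta>2 k * omg c ^ (l * k))"
          unfolding lookup_psi S2_def \<beta>2_def by (simp add: power_mult[symmetric] mult.commute)
      qed
      show "\<forall>l<c. omg c ^ l * (of_nat a * u l + of_nat b * v l) = (\<Sum>k\<in>S3. \<beta>3 k * omg c ^ (l * k))"
      proof (intro allI impI)
        fix l assume l: "l < c"
        have "Poly_Mapping.lookup (psi (omg c ^ l) (D varZ)) (int a + fst e, int b + snd e) = Poly_Mapping.lookup (sZ (omg c ^ l) * (of_nat a * U (omg c ^ l) + of_nat b * V (omg c ^ l))) (int a + fst e, int b + snd e)"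
          using QZ_eq[OF omg_c] by (simp add: Q_def)
        also have "\<dots> = omg c ^ l * (of_nat a * u l + of_nat b * v l)"
          by (simp add: lookup_single_mult Poly_Mapping.lookup_add lookup_of_nat_mult u_def v_def)
        finally show "omg c ^ l * (of_nat a * u l + of_nat b * v l) = (\<Sum>k\<in>S3. \<beta>3 k * omg c ^ (l * k))"
          unfolding lookup_psi S3_def \<beta>3_def by (simp add: power_mult[symmetric] mult.commute)
      qed
      show "\<forall>k\<in>S1. \<beta>1 k \<noteq> 0 \<longrightarrow> (\<exists>i j::nat. int c + fst e = int c * int i + int a * int k \<and> snd e = int c * int j + int b * int k)"
      proof (intro ballI impI)
        fix k assume "\<beta>1 k \<noteq> 0"
        then obtain i j where "int c + fst e - int (k * a) = int c * int i" "snd e - int (k * b) = int c * int j"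
          using phi2_nz unfolding \<beta>1_def by fastforce
        then show "\<exists>i j::nat. int c + fst e = int c * int i + int a * int k \<and> snd e = int c * int j + int b * int k"
          by (intro exI[of _ i] exI[of _ j]) (simp add: algebra_simps)
      qed
      show "\<forall>k\<in>S2. \<beta>2 k \<noteq> 0 \<longrightarrow> (\<exists>i j::nat. fst e = int c * int i + int a * int k \<and> int c + snd e = int c * int j + int b * int k)"
      proof (intro ballI impI)
        fix k assume "\<beta>2 k \<noteq> 0"
        then obtain i j where "fst e - int (k * a) = int c * int i" "int c + snd e - int (k * b) = int c * int j"
          using phi2_nz unfolding \<beta>2_def by fastforce
        then show "\<exists>i j::nat. fst e = int c * int i + int a * int k \<and> int c + snd e = int c * int j + int b * int k"
          by (intro exI[of _ i] exI[of _ j]) (simp add: algebra_simps)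
      qed
      show "\<forall>k\<in>S3. \<beta>3 k \<noteq> 0 \<longrightarrow> (\<exists>i j::nat. int a + fst e = int c * int i + int a * int k \<and> int b + snd e = int c * int j + int b * int k)"
      proof (intro ballI impI)
        fix k assume "\<beta>3 k \<noteq> 0"
        then obtain i j where "int a + fst e - int (k * a) = int c * int i" "int b + snd e - int (k * b) = int c * int j"
          using phi2_nz unfolding \<beta>3_def by fastforce
        then show "\<exists>i j::nat. int a + fst e = int c * int i + int a * int k \<and> int b + snd e = int c * int j + int b * int k"
          by (intro exI[of _ i] exI[of _ j]) (simp add: algebra_simps)
      qed
      show "\<exists>l<c. u l \<noteq> 0 \<or> v l \<noteq> 0"
        using eT unfolding T_def u_def v_def by (auto simp: Poly_Mapping.in_keys_iff)
    qed
  qed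
  then show ?thesis unfolding T_def by auto
qed

theorem main: "fp dvd D g"
proof (rule kernel, intro allI impI)
  fix l assume l: "l < c"
  have "psi (omg c ^ l) (D g) = Dop (omg c ^ l) (psi (omg c ^ l) g)"
    using Q_Dop[OF omg_c] by (simp add: Q_def)
  also have "\<dots> = 0" using all_zero l by (simp add: Dop_def)
  finally show "psi (omg c ^ l) (D g) = 0" .
qed

end

theorem theorem4p2:
  fixes a b c :: nat
  assumes "a \<ge> 2" and "b \<ge> 2" and "c \<ge> 2"
  shows "quot_rigid (varX ^ a * varY ^ b - varZ ^ c)"
  unfolding quot_rigid_def
proof (intro allI impI)
  fix D g assume "quot_LND (varX ^ a * varY ^ b - varZ ^ c) D"
  then interpret lndD a b c D using assms by unfold_locales (simp_all add: abc.fp_def[OF abc.intro[OF assms]])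
  show "(varX ^ a * varY ^ b - varZ ^ c) dvd D g" using main by (simp add: fp_def)
qed

end
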